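(* Let $n$ be a positive integer and $m$ an integer. Put $\delta_m=1+(-1)^{m-1}$; for a polynomial $P$ let $\widehat{P}$ denote the sum of the terms of $P$ of odd degree and $\overline{P}=P-\delta_m\widehat{P}$. Then for $-\pi<\arg\zeta<\pi$, $$\begin{aligned}S_{-n-1,-n}(\zeta\mathrm{e}^{-m\pi i})&=(-1)^{mn}S_{-n-1,-n}(\zeta)+\frac{(-1)^{(m+1)n}}{2^nn!}\zeta^{-n}\Big\{-\delta_m\big[\widehat{A}_n(\zeta)+\widehat{B}_n(\zeta)S_{-1,0}(\zeta)+\zeta\widehat{C}_n(\zeta)S'_{-1,0}(\zeta)\big]\\&\quad+\overline{B}_n(\zeta)\big[K''_+H^{(1)}_0(\zeta)+K''_-H^{(2)}_0(\zeta)\big]-\zeta\overline{C}_n(\zeta)\big[K''_+H^{(1)}_1(\zeta)+K''_-H^{(2)}_1(\zeta)\big]\Big\},\end{aligned}$$ where $K''_\pm=-\frac{m\pi^2(m\pm1)}{4}$.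
   Context: $H^{(1)}_\nu=J_\nu+iY_\nu$, $H^{(2)}_\nu=J_\nu-iY_\nu$ are Hankel functions ($J_\nu,Y_\nu$ Bessel functions of first and second kinds); $\psi=\Gamma'/\Gamma$. $S_{-1,0}(\zeta)=\frac12\sum_{k\ge0}\frac{(-1)^k(\zeta/2)^{2k}}{(k!)^2}\big\{[\log\frac{\zeta}{2}-\psi(k+1)]^2-\frac12\psi'(k+1)+\frac{\pi^2}{4}\big\}$ and the Lommel function $S_{-n-1,-n}(\zeta)=\frac{(-1)^n\zeta^n}{n!}\frac{d^n}{d(\zeta^2)^n}S_{-1,0}(\zeta)$. The polynomials $A_n,B_n,C_n$ are defined by $A_1=B_1=0$, $C_1=1$ and for $n\ge2$: $A_n=-2(n-1)A_{n-1}+\zeta A'_{n-1}+C_{n-1}$, $B_n=-2(n-1)B_{n-1}+\zeta B'_{n-1}-\zeta^2C_{n-1}$, $C_n=-2(n-1)C_{n-1}+B_{n-1}+\zeta C'_{n-1}$; with them, $S_{-n-1,-n}(\zeta)=\frac{(-1)^n\zeta^{-n}}{2^nn!}\big[A_n(\zeta)+B_n(\zeta)S_{-1,0}(\zeta)+\zeta C_n(\zeta)S'_{-1,0}(\zeta)\big]$. Right-hand side functions are on the principal branch $-\pi<\arg\zeta<\pi$; $g(\zeta\mathrm{e}^{-m\pi i})$ is the value of the analytic continuation of the principal branch at the point over $\zeta$ with argument $\arg\zeta-m\pi$. *)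

theory Defs
  imports "HOL-Analysis.Analysis" "HOL-Computational_Algebra.Polynomial"
begin

text \<open>Bessel functions of integer order n on the principal branch (DLMF 10.2.2, 10.8.1).\<close>

definition BesselJ :: "nat \<Rightarrow> complex \<Rightarrow> complex" where
  "BesselJ n z = (\<Sum>k. (-1)^k * (z/2)^(2*k+n) / (of_nat (fact k) * of_nat (fact (n+k))))"

definition BesselY :: "nat \<Rightarrow> complex \<Rightarrow> complex" where
  "BesselY n z =
     - ((z/2) powi (- int n) / of_real pi) *
         (\<Sum>k<n. of_nat (fact (n-k-1)) / of_nat (fact k) * (z^2/4)^k)
     + (2 / of_real pi) * Ln (z/2) * BesselJ n z
     - ((z/2)^n / of_real pi) *
         (\<Sum>k. (Digamma (of_nat (k+1)) + Digamma (of_nat (n+k+1))) * (-(z^2)/4)^k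
                / (of_nat (fact k) * of_nat (fact (n+k))))"

definition Hankel1 :: "nat \<Rightarrow> complex \<Rightarrow> complex" where
  "Hankel1 n z = BesselJ n z + \<i> * BesselY n z"

definition Hankel2 :: "nat \<Rightarrow> complex \<Rightarrow> complex" where
  "Hankel2 n z = BesselJ n z - \<i> * BesselY n z"

text \<open>S_{-1,0} on the Riemann surface of the logarithm: the point zeta = exp w, and
  log(zeta/2) = w - ln 2. The principal branch is obtained with w = Ln zeta, and the value
  at zeta e^{-m pi i} (analytic continuation) with w = Ln zeta - m pi i.\<close>

definition Scov :: "complex \<Rightarrow> complex" where
  "Scov w = (1/2) * (\<Sum>k. (-1)^k * (exp w / 2)^(2*k) / (of_nat (fact k))^2 *
       ((w - of_real (ln 2) - Digamma (of_nat (k+1)))^2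
        - (1/2) * Polygamma 1 (of_nat (k+1)) + of_real (pi^2) / 4))"

text \<open>d/d(zeta^2) expressed in the logarithmic variable w (zeta = exp w).\<close>
definition Dsq :: "(complex \<Rightarrow> complex) \<Rightarrow> complex \<Rightarrow> complex" where
  "Dsq f w = deriv f w / (2 * exp (2*w))"

text \<open>Lommel function S_{-n-1,-n} on the Riemann surface of the logarithm.\<close>
definition Scov_n :: "nat \<Rightarrow> complex \<Rightarrow> complex" where
  "Scov_n n w = (-1)^n * exp (of_nat n * w) / of_nat (fact n) * (Dsq ^^ n) Scov w"

definition S10 :: "complex \<Rightarrow> complex" where
  "S10 z = Scov (Ln z)"

definition Sn :: "nat \<Rightarrow> complex \<Rightarrow> complex" where
  "Sn n z = Scov_n n (Ln z)"

text \<open>Polynomials A_n, B_n, C_n (index n >= 1; index 0 unused).\<close>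
fun ABC :: "nat \<Rightarrow> complex poly \<times> complex poly \<times> complex poly" where
  "ABC 0 = (0, 0, 0)"
| "ABC (Suc 0) = (0, 0, 1)"
| "ABC (Suc (Suc k)) =
     (let (A, B, C) = ABC (Suc k); c = - 2 * of_nat (Suc k); X = [:0, 1:] in
       (smult c A + X * pderiv A + C,
        smult c B + X * pderiv B - X^2 * C,
        smult c C + B + X * pderiv C))"

definition polyA :: "nat \<Rightarrow> complex poly" where "polyA n = fst (ABC n)"
definition polyB :: "nat \<Rightarrow> complex poly" where "polyB n = fst (snd (ABC n))"
definition polyC :: "nat \<Rightarrow> complex poly" where "polyC n = snd (snd (ABC n))"

definition odd_part :: "complex poly \<Rightarrow> complex poly" where
  "odd_part p = (\<Sum>i\<le>degree p. if odd i then monom (coeff p i) i else 0)"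

definition delta :: "int \<Rightarrow> complex" where
  "delta m = 1 + (-1) powi (m - 1)"

definition bar_part :: "int \<Rightarrow> complex poly \<Rightarrow> complex poly" where
  "bar_part m p = p - smult (delta m) (odd_part p)"

end

theory Submission
  imports Defs "HOL-Complex_Analysis.Cauchy_Integral_Formula"
begin


definition aa :: "nat \<Rightarrow> complex" where
  "aa k = (-1)^k / (4^k * (fact k)^2)"

definition psi :: "nat \<Rightarrow> complex" where
  "psi k = Digamma (of_nat (k+1))"

definition qq :: "nat \<Rightarrow> complex" where
  "qq k = (psi k)^2 - (1/2) * Polygamma 1 (of_nat (k+1)) + of_real (pi^2) / 4"

definition fa :: "complex fps" where "fa = Abs_fps aa"
definition fp :: "complex fps" where "fp = Abs_fps (\<lambda>k. aa k * psi k)"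
definition fq :: "complex fps" where "fq = Abs_fps (\<lambda>k. aa k * qq k)"

lemma pow4_ge: "(real k + 1)^2 \<le> 4^k"
proof (induction k)
  case (Suc k)
  have "(real (Suc k) + 1)^2 \<le> 4 * (real k + 1)^2" by (simp add: power2_eq_square algebra_simps)
  also have "\<dots> \<le> 4 * 4^k" using Suc by simp
  finally show ?case by simp
qed simp

lemma norm_aa: "norm (aa k) = 1 / (4^k * (fact k)^2)"
  by (simp add: aa_def norm_divide norm_mult norm_power)

lemma rad_inf:
  assumes "\<And>k. norm (c k) \<le> M * (real k + 1)^2"
  shows "fps_conv_radius (Abs_fps (\<lambda>k. aa k * c k)) = \<infinity>"
  unfolding fps_conv_radius_def
proof (rule conv_radius_inftyI'')
  fix z :: complex
  show "summable (\<lambda>n. fps_nth (Abs_fps (\<lambda>k. aa k * c k)) n * z ^ n)"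
  proof (rule summable_comparison_test)
    show "summable (\<lambda>n. \<bar>M\<bar> * (inverse (fact n) * norm z ^ n))"
      by (intro summable_mult summable_exp)
    show "\<exists>N. \<forall>n\<ge>N. norm (fps_nth (Abs_fps (\<lambda>k. aa k * c k)) n * z ^ n) \<le> \<bar>M\<bar> * (inverse (fact n) * norm z ^ n)"
    proof (intro exI allI impI)
      fix n :: nat
      have f: "(fact n :: real) \<ge> 1" by simp
      have "norm (aa n * c n * z^n) = norm (aa n) * norm (c n) * norm z ^ n"
        by (simp add: norm_mult norm_power)
      also have "\<dots> \<le> (1 / (4^n * (fact n)^2)) * (\<bar>M\<bar> * (real n + 1)^2) * norm z ^ n"
        unfolding norm_aa
        by (intro mult_right_mono mult_left_mono order.trans[OF assms]) (auto intro: mult_right_mono)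
      also have "\<dots> = \<bar>M\<bar> * norm z ^ n * ((real n + 1)^2 / 4^n) / (fact n)^2"
        by (simp add: field_simps)
      also have "\<dots> \<le> \<bar>M\<bar> * norm z ^ n * 1 / (fact n)^2"
        using pow4_ge[of n] by (intro divide_right_mono mult_left_mono) auto
      also have "\<dots> \<le> \<bar>M\<bar> * norm z ^ n * 1 / fact n"
        using f by (intro divide_left_mono) (auto simp: power2_eq_square)
      also have "\<dots> = \<bar>M\<bar> * (inverse (fact n) * norm z ^ n)" by (simp add: field_simps)
      finally show "norm (fps_nth (Abs_fps (\<lambda>k. aa k * c k)) n * z ^ n) \<le> \<bar>M\<bar> * (inverse (fact n) * norm z ^ n)"
        by simp
    qed
  qed
qed

lemma harm_le_n: "harm k \<le> (real k)"
proof -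
  have "harm k = (\<Sum>j<k. inverse (real (Suc j)))" by (simp add: harm_altdef)
  also have "\<dots> \<le> (\<Sum>j<k. 1)" by (intro sum_mono) (auto simp: field_simps)
  finally show ?thesis by simp
qed

lemma norm_psi: "norm (psi k) \<le> real k + 1"
proof -
  have "psi k = of_real (harm k - euler_mascheroni)"
    unfolding psi_def using Digamma_of_nat[of k, where 'a=complex]
    by (simp add: of_real_harm)
  hence "norm (psi k) = \<bar>harm k - euler_mascheroni\<bar>" by (simp only: norm_of_real)
  also have "\<dots> \<le> real k + 1"
    using harm_le_n[of k] harm_nonneg[of k, where 'a=real] euler_mascheroni_pos euler_mascheroni_less_13_over_22 of_nat_0_le_iff[of k, where 'a=real]
    unfolding abs_le_iff by linarith
  finally show ?thesis .
qed

lemma norm_pg: "norm (Polygamma 1 (of_nat (k+1) :: complex)) \<le> Polygamma 1 (1::real)"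
proof -
  have "(of_nat (k+1) :: complex) = of_real (real (k+1))" by simp
  hence "Polygamma 1 (of_nat (k+1) :: complex) = of_real (Polygamma 1 (real (k+1)))"
    by (simp only: Polygamma_of_real)
  hence "norm (Polygamma 1 (of_nat (k+1) :: complex)) = \<bar>Polygamma 1 (real (k+1))\<bar>" by simp
  also have "\<dots> = Polygamma 1 (real (k+1))"
    using Polygamma_real_odd_pos[of "real (k+1)" 1] nonpos_Ints_nonpos[of "real (k+1)"] by force
  also have "\<dots> \<le> Polygamma 1 (1::real)"
    using Polygamma_real_strict_antimono[of 1 "real (k+1)" 1] by (cases k) auto
  finally show ?thesis .
qed

lemma rad_fa: "fps_conv_radius fa = \<infinity>"
  using rad_inf[of "\<lambda>_. 1" 1] by (simp add: fa_def)

lemma rad_fp: "fps_conv_radius fp = \<infinity>"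
  unfolding fp_def
proof (rule rad_inf)
  fix k show "norm (psi k) \<le> 1 * (real k + 1)^2"
  proof -
    have "real k + 1 \<le> (real k+1)^2" by (simp add: power2_eq_square)
    thus ?thesis using norm_psi[of k] by linarith
  qed
qed

lemma rad_fq: "fps_conv_radius fq = \<infinity>"
  unfolding fq_def
proof (rule rad_inf)
  fix k
  define P where "P = Polygamma 1 (1::real)"
  have P0: "P \<ge> 0" using norm_pg[of 0] P_def by (meson norm_ge_zero order.trans)
  have k1: "1 \<le> (real k + 1)^2" by (rule one_le_power) simp
  have "norm (qq k) \<le> norm ((psi k)^2) + norm ((1/2) * Polygamma 1 (of_nat (k+1) :: complex)) + norm (of_real (pi^2) / (4::complex))"
    unfolding qq_def by (rule order.trans[OF norm_triangle_ineq], rule add_right_mono, rule norm_triangle_ineq4)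
  also have "\<dots> = norm (psi k)^2 + (1/2) * norm (Polygamma 1 (of_nat (k+1) :: complex)) + pi^2/4"
    by (simp add: norm_power norm_mult norm_divide)
  also have "\<dots> \<le> (real k + 1)^2 + (1/2) * P + pi^2/4"
    using norm_psi[of k] norm_pg[of k] P_def by (intro add_mono power_mono) auto
  also have "\<dots> \<le> (real k + 1)^2 + P * (real k + 1)^2 + pi^2 * (real k + 1)^2"
  proof -
    have "(1/2) * P \<le> P * 1" using P0 by simp
    also have "\<dots> \<le> P * (real k + 1)^2" by (rule mult_left_mono[OF k1 P0])
    finally have a: "(1/2) * P \<le> P * (real k + 1)^2" .
    have "pi^2/4 \<le> pi^2 * 1" by simp
    also have "\<dots> \<le> pi^2 * (real k + 1)^2" by (rule mult_left_mono[OF k1]) simp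
    finally show ?thesis using a by linarith
  qed
  also have "\<dots> = (1 + P + pi^2) * (real k + 1)^2" by (simp add: algebra_simps)
  finally show "norm (qq k) \<le> (1 + P + pi^2) * (real k + 1)^2" .
qed


definition th :: "complex fps \<Rightarrow> complex fps" where "th f = fps_X * fps_deriv f"

lemma th_nth [simp]: "fps_nth (th f) n = of_nat n * fps_nth f n"
  by (cases n) (simp_all add: th_def)

definition ent :: "complex fps \<Rightarrow> bool" where "ent f \<longleftrightarrow> fps_conv_radius f = \<infinity>"

lemma ent_min: "fps_conv_radius h \<ge> min (fps_conv_radius f) (fps_conv_radius g) \<Longrightarrow> ent f \<Longrightarrow> ent g \<Longrightarrow> ent h"
  unfolding ent_def by (simp add: top_ereal_def[symmetric] top.extremum_unique)

lemma ent_deriv: "ent f \<Longrightarrow> ent (fps_deriv f)"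
  unfolding ent_def using fps_conv_radius_deriv[of f] by (simp add: top_ereal_def[symmetric] top.extremum_unique)

lemma ent_X: "ent fps_X" by (simp add: ent_def)

lemma ent_add: "ent f \<Longrightarrow> ent g \<Longrightarrow> ent (f + g)" by (rule ent_min[OF fps_conv_radius_add])
lemma ent_diff: "ent f \<Longrightarrow> ent g \<Longrightarrow> ent (f - g)" by (rule ent_min[OF fps_conv_radius_diff])
lemma ent_mult: "ent f \<Longrightarrow> ent g \<Longrightarrow> ent (f * g)" by (rule ent_min[OF fps_conv_radius_mult])
lemma ent_const: "ent (fps_const c)" by (simp add: ent_def)
lemma ent_th: "ent f \<Longrightarrow> ent (th f)" unfolding th_def by (intro ent_mult ent_X ent_deriv)

lemma ent_fa: "ent fa" and ent_fp: "ent fp" and ent_fq: "ent fq"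
  using rad_fa rad_fp rad_fq by (simp_all add: ent_def)

definition EE :: "complex fps \<Rightarrow> complex \<Rightarrow> complex" where
  "EE f w = eval_fps f (exp (2*w))"

lemma ent_norm: "ent f \<Longrightarrow> ereal (norm z) < fps_conv_radius f"
  by (simp add: ent_def)

lemma EE_add: "ent f \<Longrightarrow> ent g \<Longrightarrow> EE (f + g) w = EE f w + EE g w"
  unfolding EE_def by (intro eval_fps_add ent_norm) assumption+
lemma EE_diff: "ent f \<Longrightarrow> ent g \<Longrightarrow> EE (f - g) w = EE f w - EE g w"
  unfolding EE_def by (intro eval_fps_diff ent_norm) assumption+
lemma EE_const: "ent f \<Longrightarrow> EE (fps_const c * f) w = c * EE f w"
  unfolding EE_def by (subst eval_fps_mult) (auto simp: ent_def)
lemma EE_X: "ent f \<Longrightarrow> EE (fps_X * f) w = exp (2*w) * EE f w"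
  unfolding EE_def by (subst eval_fps_mult) (auto simp: ent_def)

lemma eval_th: "ent f \<Longrightarrow> eval_fps (th f) z = z * eval_fps (fps_deriv f) z"
  unfolding th_def by (subst eval_fps_mult) (auto intro: ent_norm ent_X ent_deriv)

lemma EE_deriv: "ent f \<Longrightarrow> ((\<lambda>w. EE f w) has_field_derivative 2 * EE (th f) w) (at w)"
proof -
  assume e: "ent f"
  have "((\<lambda>w. eval_fps f (exp (2*w))) has_field_derivative eval_fps (fps_deriv f) (exp (2*w)) * (exp (2*w) * 2)) (at w)"
    by (intro DERIV_chain2[where f="eval_fps f"] has_field_derivative_eval_fps ent_norm e) (auto intro!: derivative_eq_intros)
  thus ?thesis unfolding EE_def using eval_th[OF e, of "exp (2*w)"] by (simp add: algebra_simps)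
qed

lemma aa_Suc: "of_nat (Suc j)^2 * aa (Suc j) = - aa j / 4"
proof -
  have s: "(of_nat (Suc j)::complex) \<noteq> 0" by (simp del: of_nat_Suc)
  have f: "(fact j :: complex) \<noteq> 0" by simp
  have "aa (Suc j) = - ((-1)^j / (4 * 4^j * (of_nat (Suc j) * fact j)^2))"
    unfolding aa_def by (simp add: fact_Suc del: of_nat_Suc)
  thus ?thesis using s f unfolding aa_def by (simp add: field_simps power2_eq_square del: of_nat_Suc)
qed

lemma psi_Suc: "psi (Suc j) = psi j + 1 / of_nat (Suc j)"
proof -
  have "psi (Suc j) = Digamma (of_nat (Suc j) + 1)" by (simp add: psi_def add_ac)
  also have "\<dots> = Digamma (of_nat (Suc j)) + 1 / of_nat (Suc j)"
    by (rule Digamma_plus1) (simp del: of_nat_Suc)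
  finally show ?thesis by (simp add: psi_def)
qed

lemma I1: "th (th fa) = fps_const (-1/4) * (fps_X * fa)"
proof (rule fps_ext)
  fix n show "fps_nth (th (th fa)) n = fps_nth (fps_const (-1/4) * (fps_X * fa)) n"
  proof (cases n)
    case (Suc j)
    have "fps_nth (th (th fa)) n = of_nat (Suc j)^2 * aa (Suc j)" using Suc by (simp add: fa_def power2_eq_square)
    also have "\<dots> = - aa j / 4" by (rule aa_Suc)
    finally show ?thesis using Suc by (simp add: fa_def)
  qed (simp add: fa_def)
qed

lemma I2: "th (th fp) = th fa - fps_const (1/4) * (fps_X * fp)"
proof (rule fps_ext)
  fix n show "fps_nth (th (th fp)) n = fps_nth (th fa - fps_const (1/4) * (fps_X * fp)) n"
  proof (cases n)
    case (Suc j)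
    have s: "of_nat (Suc j) \<noteq> (0::complex)" by (simp del: of_nat_Suc)
    have "fps_nth (th (th fp)) n = (of_nat (Suc j)^2 * aa (Suc j)) * psi (Suc j)" using Suc by (simp add: fp_def power2_eq_square)
    also have "\<dots> = (- aa j / 4) * (psi j + 1 / of_nat (Suc j))" by (simp only: aa_Suc psi_Suc)
    also have "\<dots> = of_nat (Suc j) * aa (Suc j) - (1/4) * (aa j * psi j)"
    proof -
      have "of_nat (Suc j) * aa (Suc j) = (of_nat (Suc j)^2 * aa (Suc j)) / of_nat (Suc j)"
        using s by (simp add: power2_eq_square)
      also have "\<dots> = (- aa j / 4) / of_nat (Suc j)" by (simp only: aa_Suc)
      finally show ?thesis using s by (simp add: field_simps del: of_nat_Suc)
    qed
    finally show ?thesis using Suc by (simp add: fa_def fp_def)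
  qed (simp add: fa_def fp_def)
qed


definition uu :: "complex \<Rightarrow> complex" where "uu w = w - of_real (ln 2)"
definition FF :: "complex \<Rightarrow> complex" where "FF w = EE fa w"
definition FF1 :: "complex \<Rightarrow> complex" where "FF1 w = 2 * EE (th fa) w"
definition LL :: "complex \<Rightarrow> complex" where "LL w = uu w * FF w - EE fp w"
definition LL1 :: "complex \<Rightarrow> complex" where "LL1 w = FF w + 2 * uu w * EE (th fa) w - 2 * EE (th fp) w"

lemma EE_thth_fa: "EE (th (th fa)) w = - (1/4) * exp (2*w) * EE fa w"
  by (simp add: I1 EE_const EE_X ent_X ent_fa ent_mult)

lemma EE_thth_fp: "EE (th (th fp)) w = EE (th fa) w - (1/4) * exp (2*w) * EE fp w"
  by (simp add: I2 EE_diff EE_const EE_X ent_X ent_fp ent_mult ent_const ent_th ent_fa)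

lemma FF_deriv: "(FF has_field_derivative FF1 w) (at w)"
  unfolding FF_def FF1_def by (rule EE_deriv[OF ent_fa])

lemma FF1_deriv: "(FF1 has_field_derivative (- exp (2*w) * FF w)) (at w)"
proof -
  have "(FF1 has_field_derivative 2 * (2 * EE (th (th fa)) w)) (at w)"
    unfolding FF1_def[abs_def] by (intro DERIV_cmult EE_deriv ent_th ent_fa)
  thus ?thesis by (simp add: EE_thth_fa FF_def algebra_simps)
qed

lemma uu_deriv: "(uu has_field_derivative 1) (at w)"
  unfolding uu_def[abs_def] by (auto intro!: derivative_eq_intros)

lemma LL_deriv: "(LL has_field_derivative LL1 w) (at w)"
    apply (rule DERIV_cong)
     apply (unfold LL_def[abs_def])
     apply (rule DERIV_diff DERIV_mult uu_deriv FF_deriv EE_deriv ent_fp)+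
    by (simp add: LL1_def FF1_def algebra_simps)

lemma LL1_deriv: "(LL1 has_field_derivative (- exp (2*w) * LL w)) (at w)"
    apply (rule DERIV_cong)
     apply (unfold LL1_def[abs_def])
     apply (rule DERIV_diff DERIV_add DERIV_cmult DERIV_mult uu_deriv FF_deriv EE_deriv ent_th ent_fp ent_fa)+
    by (simp add: EE_thth_fa EE_thth_fp LL_def FF1_def FF_def algebra_simps)




lemma ABC_1: "polyA 1 = 0" "polyB 1 = 0" "polyC 1 = 1"
  by (simp_all add: polyA_def polyB_def polyC_def)

lemma ABC_SS:
  "polyA (Suc (Suc k)) = smult (- 2 * of_nat (Suc k)) (polyA (Suc k)) + [:0, 1:] * pderiv (polyA (Suc k)) + polyC (Suc k)"
  "polyB (Suc (Suc k)) = smult (- 2 * of_nat (Suc k)) (polyB (Suc k)) + [:0, 1:] * pderiv (polyB (Suc k)) - [:0, 1:]^2 * polyC (Suc k)"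
  "polyC (Suc (Suc k)) = smult (- 2 * of_nat (Suc k)) (polyC (Suc k)) + polyB (Suc k) + [:0, 1:] * pderiv (polyC (Suc k))"
proof -
  obtain A B C where e: "ABC (Suc k) = (A, B, C)" by (cases "ABC (Suc k)") auto
  show "polyA (Suc (Suc k)) = smult (- 2 * of_nat (Suc k)) (polyA (Suc k)) + [:0, 1:] * pderiv (polyA (Suc k)) + polyC (Suc k)"
    "polyB (Suc (Suc k)) = smult (- 2 * of_nat (Suc k)) (polyB (Suc k)) + [:0, 1:] * pderiv (polyB (Suc k)) - [:0, 1:]^2 * polyC (Suc k)"
    "polyC (Suc (Suc k)) = smult (- 2 * of_nat (Suc k)) (polyC (Suc k)) + polyB (Suc k) + [:0, 1:] * pderiv (polyC (Suc k))"
    unfolding polyA_def polyB_def polyC_def by (simp_all only: ABC.simps e Let_def prod.case fst_conv snd_conv)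
qed

lemma poly_exp_deriv: "((\<lambda>w. poly p (exp w)) has_field_derivative poly (pderiv p) (exp w) * exp w) (at w)"
  by (rule DERIV_chain2[OF poly_DERIV DERIV_exp])

lemma exp_lin_deriv: "((\<lambda>w. exp (- (2 * of_nat n * w))) has_field_derivative - (2 * of_nat n) * exp (- (2 * of_nat n * w))) (at w)"
  by (auto intro!: derivative_eq_intros)

lemma Dsq_ode:
  fixes G G1 :: "complex \<Rightarrow> complex"
  assumes d0: "\<And>w. (G has_field_derivative G1 w) (at w)"
      and d1: "\<And>w. (G1 has_field_derivative (- exp (2*w) * G w)) (at w)"
  shows "(Dsq ^^ Suc k) G = (\<lambda>w. exp (- (2 * of_nat (Suc k) * w)) / 2^Suc k *
           (poly (polyB (Suc k)) (exp w) * G w + poly (polyC (Suc k)) (exp w) * G1 w))"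
proof (induction k)
  case 0
  show ?case
  proof
    fix w :: complex
    have "deriv G w = G1 w" by (rule DERIV_imp_deriv[OF d0])
    moreover have "exp (- (2 * w)) = inverse (exp (2 * w))" by (simp add: exp_minus)
    ultimately show "(Dsq ^^ Suc 0) G w = exp (- (2 * of_nat (Suc 0) * w)) / 2^Suc 0 *
           (poly (polyB (Suc 0)) (exp w) * G w + poly (polyC (Suc 0)) (exp w) * G1 w)"
      using ABC_1 by (simp add: Dsq_def field_simps)
  qed
next
  case (Suc k)
  define n where "n = Suc k"
  define B where "B = polyB n"
  define C where "C = polyC n"
  define H where "H = (\<lambda>w. exp (- (2 * of_nat n * w)) / 2^n *
           (poly B (exp w) * G w + poly C (exp w) * G1 w))"
  have IH: "(Dsq ^^ n) G = H" using Suc unfolding n_def H_def B_def C_def by simp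
  show ?case
  proof
    fix w :: complex
    define z where "z = exp w"
    define e where "e = exp (- (2 * of_nat n * w))"
    have z0: "z \<noteq> 0" by (simp add: z_def)
    have "(H has_field_derivative
       (- (2 * of_nat n) * e / 2^n) * (poly B z * G w + poly C z * G1 w)
       + e / 2^n * (poly (pderiv B) z * z * G w + poly B z * G1 w
                    + (poly (pderiv C) z * z * G1 w + poly C z * (- exp (2*w) * G w)))) (at w)"
      apply (rule DERIV_cong)
       apply (unfold H_def)
       apply (rule DERIV_mult DERIV_add DERIV_cdivide exp_lin_deriv poly_exp_deriv d0 d1)+
      by (simp add: z_def e_def algebra_simps)
    hence dH: "deriv H w = (- (2 * of_nat n) * e / 2^n) * (poly B z * G w + poly C z * G1 w)
       + e / 2^n * (poly (pderiv B) z * z * G w + poly B z * G1 w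
                    + (poly (pderiv C) z * z * G1 w + poly C z * (- exp (2*w) * G w)))"
      by (rule DERIV_imp_deriv)
    have e2: "exp (2*w) = z^2" by (simp add: z_def exp_double)
    have e3: "exp (- (2 * of_nat (Suc n) * w)) = e / z^2"
      unfolding e_def z_def by (simp add: exp_minus exp_double[symmetric] exp_add[symmetric] field_simps flip: exp_of_nat_mult)
    have "(Dsq ^^ Suc n) G w = deriv H w / (2 * exp (2*w))" using IH by (simp add: Dsq_def)
    also have "\<dots> = exp (- (2 * of_nat (Suc n) * w)) / 2^Suc n *
           (poly (polyB (Suc n)) (exp w) * G w + poly (polyC (Suc n)) (exp w) * G1 w)"
      unfolding dH e2 e3 ABC_SS(2,3)[of k, folded n_def] B_def[symmetric] C_def[symmetric] z_def[symmetric]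
      using z0 by (simp add: field_simps power2_eq_square)
    finally show "(Dsq ^^ Suc (Suc k)) G w = exp (- (2 * of_nat (Suc (Suc k)) * w)) / 2^Suc (Suc k) *
           (poly (polyB (Suc (Suc k))) (exp w) * G w + poly (polyC (Suc (Suc k))) (exp w) * G1 w)"
      by (simp add: n_def)
  qed
qed




definition evp :: "complex poly \<Rightarrow> bool" where "evp p \<longleftrightarrow> (\<forall>i. odd i \<longrightarrow> coeff p i = 0)"

lemma X_mult_coeff: "coeff ([:0, 1:] * (p::complex poly)) i = (if i = 0 then 0 else coeff p (i - 1))"
  by (cases i) (auto simp: coeff_pCons mult_pCons_left)

lemma evp_add: "evp p \<Longrightarrow> evp q \<Longrightarrow> evp (p + q)" by (simp add: evp_def)
lemma evp_diff: "evp p \<Longrightarrow> evp q \<Longrightarrow> evp (p - q)" by (simp add: evp_def)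
lemma evp_smult: "evp p \<Longrightarrow> evp (smult c p)" by (simp add: evp_def)
lemma evp_Xd: "evp p \<Longrightarrow> evp ([:0, 1:] * pderiv p)"
  unfolding evp_def X_mult_coeff coeff_pderiv
  by (auto simp: Suc_diff_1)
lemma evp_X2: "evp p \<Longrightarrow> evp ([:0, 1:]^2 * p)"
  unfolding evp_def power2_eq_square mult.assoc X_mult_coeff
proof (intro allI impI)
  fix i :: nat assume h: "\<forall>i. odd i \<longrightarrow> coeff p i = 0" and o: "odd i"
  show "(if i = 0 then 0 else if i - 1 = 0 then 0 else coeff p (i - 1 - 1)) = 0"
  proof (cases "i \<le> 1")
    case False
    hence "odd (i - 1 - 1)" using o by (simp add: odd_pos)
    thus ?thesis using h by simp
  qed auto
qed

lemma evp_ABC: "evp (polyA (Suc k)) \<and> evp (polyB (Suc k)) \<and> evp (polyC (Suc k))"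
proof (induction k)
  case 0 thus ?case by (auto simp: ABC_1[simplified] evp_def coeff_1 dest: odd_pos)
next
  case (Suc k)
  thus ?case unfolding ABC_SS
    by (intro conjI evp_add evp_diff evp_smult evp_Xd evp_X2) auto
qed

lemma odd_part_evp: "evp p \<Longrightarrow> odd_part p = 0"
  unfolding odd_part_def evp_def by (intro sum.neutral) auto

lemma bar_part_evp: "evp p \<Longrightarrow> bar_part m p = p"
  by (simp add: bar_part_def odd_part_evp)




lemma sums_EE: "ent f \<Longrightarrow> (\<lambda>k. fps_nth f k * exp (2*w) ^ k) sums EE f w"
  unfolding EE_def by (rule sums_eval_fps) (simp add: ent_def)

lemma Scov_repr: "Scov w = (1/2) * (uu w ^ 2 * EE fa w - 2 * uu w * EE fp w + EE fq w)"
proof -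
  define Z where "Z = exp (2*w)"
  have trm: "(-1)^k * (exp w / 2)^(2*k) / (of_nat (fact k))^2 *
       ((w - of_real (ln 2) - Digamma (of_nat (k+1)))^2
        - (1/2) * Polygamma 1 (of_nat (k+1)) + of_real (pi^2) / 4)
     = uu w ^ 2 * (fps_nth fa k * Z ^ k) - 2 * uu w * (fps_nth fp k * Z ^ k) + fps_nth fq k * Z ^ k" for k
  proof -
    have "(exp w / 2)^(2*k) = Z ^ k / 4 ^ k"
      unfolding Z_def power_mult exp_double by (simp add: power_divide)
    thus ?thesis
      by (simp add: fa_def fp_def fq_def aa_def qq_def psi_def uu_def field_simps power2_eq_square)
  qed
  have "(\<lambda>k. uu w ^ 2 * (fps_nth fa k * Z ^ k) - 2 * uu w * (fps_nth fp k * Z ^ k) + fps_nth fq k * Z ^ k)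
          sums (uu w ^ 2 * EE fa w - 2 * uu w * EE fp w + EE fq w)"
    unfolding Z_def by (intro sums_add sums_diff sums_mult sums_EE ent_fa ent_fp ent_fq)
  hence "(\<lambda>k. (-1)^k * (exp w / 2)^(2*k) / (of_nat (fact k))^2 *
       ((w - of_real (ln 2) - Digamma (of_nat (k+1)))^2
        - (1/2) * Polygamma 1 (of_nat (k+1)) + of_real (pi^2) / 4)) sums (uu w ^ 2 * EE fa w - 2 * uu w * EE fp w + EE fq w)"
    by (simp only: trm)
  thus ?thesis unfolding Scov_def by (simp add: sums_iff)
qed

lemma EE_hol: "ent f \<Longrightarrow> EE f holomorphic_on UNIV"
  using EE_deriv by (auto simp: holomorphic_on_open)

lemma uu_hol: "uu holomorphic_on UNIV"
  unfolding uu_def[abs_def] by (intro holomorphic_intros)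

lemma Scov_hol: "Scov holomorphic_on UNIV"
proof -
  have e: "Scov = (\<lambda>w. (1/2) * (uu w ^ 2 * EE fa w - 2 * uu w * EE fp w + EE fq w))"
    using Scov_repr by auto
  show ?thesis
    by (subst e) (intro holomorphic_intros EE_hol uu_hol ent_fa ent_fp ent_fq)
qed

lemma Dsq_hol: "f holomorphic_on UNIV \<Longrightarrow> Dsq f holomorphic_on UNIV"
  unfolding Dsq_def[abs_def]
  by (intro holomorphic_intros holomorphic_deriv) auto

lemma Dsqn_hol: "f holomorphic_on UNIV \<Longrightarrow> (Dsq ^^ n) f holomorphic_on UNIV"
  by (induction n) (auto intro: Dsq_hol)

lemma hol_diff_at: "f holomorphic_on UNIV \<Longrightarrow> f field_differentiable at x"
  using holomorphic_on_imp_differentiable_at by blast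

lemma Dsq_add: "f holomorphic_on UNIV \<Longrightarrow> g holomorphic_on UNIV \<Longrightarrow>
    Dsq (\<lambda>w. f w + g w) = (\<lambda>w. Dsq f w + Dsq g w)"
  unfolding Dsq_def by (rule ext) (simp add: deriv_add hol_diff_at add_divide_distrib)

lemma Dsqn_add: "f holomorphic_on UNIV \<Longrightarrow> g holomorphic_on UNIV \<Longrightarrow>
    (Dsq ^^ n) (\<lambda>w. f w + g w) = (\<lambda>w. (Dsq ^^ n) f w + (Dsq ^^ n) g w)"
proof (induction n)
  case (Suc n)
  have "(Dsq ^^ Suc n) (\<lambda>w. f w + g w) = Dsq (\<lambda>w. (Dsq ^^ n) f w + (Dsq ^^ n) g w)"
    using Suc by simp
  also have "\<dots> = (\<lambda>w. (Dsq ^^ Suc n) f w + (Dsq ^^ Suc n) g w)"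
    using Suc.prems by (simp add: Dsq_add Dsqn_hol)
  finally show ?case .
qed simp

lemma shift_hol: "f holomorphic_on UNIV \<Longrightarrow> (\<lambda>w. f (w - c)) holomorphic_on UNIV"
  by (rule holomorphic_on_compose_gen[where f="\<lambda>w. w - c" and g=f and t=UNIV, unfolded o_def])
     (auto intro: holomorphic_intros)

lemma Dsq_shift:
  assumes "f holomorphic_on UNIV" "exp (2*c) = 1"
  shows "Dsq (\<lambda>w. f (w - c)) = (\<lambda>w. Dsq f (w - c))"
proof
  fix w :: complex
  have "((\<lambda>w. f (w - c)) has_field_derivative deriv f (w - c) * 1) (at w)"
    by (intro DERIV_chain2[where f=f] field_differentiable_derivI hol_diff_at assms(1))
       (auto intro!: derivative_eq_intros)
  hence "deriv (\<lambda>w. f (w - c)) w = deriv f (w - c)" by (simp add: DERIV_imp_deriv)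
  moreover have "exp (2 * (w - c)) = exp (2*w)"
    using assms(2) by (simp add: right_diff_distrib exp_diff)
  ultimately show "Dsq (\<lambda>w. f (w - c)) w = Dsq f (w - c)" by (simp add: Dsq_def)
qed

lemma Dsqn_shift:
  assumes "f holomorphic_on UNIV" "exp (2*c) = 1"
  shows "(Dsq ^^ n) (\<lambda>w. f (w - c)) = (\<lambda>w. (Dsq ^^ n) f (w - c))"
proof (induction n)
  case (Suc n)
  have "(Dsq ^^ Suc n) (\<lambda>w. f (w - c)) = Dsq (\<lambda>w. (Dsq ^^ n) f (w - c))" using Suc by simp
  also have "\<dots> = (\<lambda>w. (Dsq ^^ Suc n) f (w - c))"
    using Dsq_shift[OF Dsqn_hol[OF assms(1)] assms(2)] by simp
  finally show ?case .
qed simp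




lemma Jterm0: "(-1)^k * (z/2)^(2*k) / (fact k * fact k) = fps_nth fa k * (z^2)^k"
  for z :: complex
proof -
  have "(z/2)^(2*k) = (z^2)^k / 4^k" by (simp add: power_mult power_divide)
  thus ?thesis by (simp add: fa_def aa_def power2_eq_square)
qed

lemma BJ0: "z \<noteq> 0 \<Longrightarrow> BesselJ 0 z = FF (Ln z)"
proof -
  assume z: "z \<noteq> 0"
  have Z: "exp (2 * Ln z) = z^2" using z by (simp add: exp_double)
  have "(\<lambda>k. fps_nth fa k * exp (2 * Ln z) ^ k) sums FF (Ln z)" unfolding FF_def by (rule sums_EE[OF ent_fa])
  hence "(\<lambda>k. (-1)^k * (z/2)^(2*k+0) / (of_nat (fact k) * of_nat (fact (0+k)))) sums FF (Ln z)"
    unfolding Z by (simp only: Jterm0 add_0 add_0_right of_nat_fact)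
  thus ?thesis unfolding BesselJ_def by (rule sums_unique[symmetric])
qed

lemma Ln_half: "z \<noteq> 0 \<Longrightarrow> Ln (z/2) = uu (Ln z)"
  using Ln_divide_of_real[of 2 z] by (simp add: uu_def)


lemma Yterm0: "(Digamma (of_nat (k+1)) + Digamma (of_nat (0+k+1))) * (-(z^2)/4)^k
                / (of_nat (fact k) * of_nat (fact (0+k))) = 2 * (fps_nth fp k * (z^2)^k)" for z :: complex
proof -
  have a0: "-(z^2)/4 = (-1) * (z^2/4)" by simp
  have a: "(-(z^2)/4)^k = (-1)^k * (z^2)^k / 4^k" unfolding a0 power_mult_distrib power_divide by simp
  have b: "Digamma (of_nat (0+k+1)) = psi k" "Digamma (of_nat (k+1)) = psi k" by (simp_all add: psi_def)
  have c: "fps_nth fp k = (-1)^k / (4^k * (fact k * fact k)) * psi k" by (simp add: fp_def aa_def power2_eq_square)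
  show ?thesis unfolding a b c of_nat_fact add_0
    by (simp add: divide_inverse algebra_simps inverse_mult_distrib)
qed


lemma BY0: "z \<noteq> 0 \<Longrightarrow> BesselY 0 z = (2 / of_real pi) * LL (Ln z)"
proof -
  assume z: "z \<noteq> 0"
  have Z: "exp (2 * Ln z) = z^2" using z by (simp add: exp_double)
  have "(\<lambda>k. 2 * (fps_nth fp k * exp (2 * Ln z) ^ k)) sums (2 * EE fp (Ln z))"
    by (intro sums_mult sums_EE ent_fp)
  hence s: "(\<lambda>k. (Digamma (of_nat (k+1)) + Digamma (of_nat (0+k+1))) * (-(z^2)/4)^k
                / (of_nat (fact k) * of_nat (fact (0+k)))) sums (2 * EE fp (Ln z))"
    unfolding Z Yterm0 .
  show ?thesis unfolding BesselY_def BJ0[OF z] Ln_half[OF z] sums_unique[OF s, symmetric]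
    by (simp add: LL_def FF_def algebra_simps)
qed

lemma aa_Suc': "aa (Suc k) = - ((-1)^k / (4 * 4^k * (of_nat (Suc k) * fact k)^2))"
  unfolding aa_def by (simp add: fact_Suc del: of_nat_Suc)

lemma Jterm1: "z * ((-1)^k * (z/2)^(2*k+1) / (of_nat (fact k) * of_nat (fact (1+k))))
    = -2 * (fps_nth (th fa) (Suc k) * (z^2)^(Suc k))" for z :: complex
proof -
  define x where "x = (of_nat (Suc k) :: complex)"
  define s where "s = ((-1)^k :: complex)"
  define F where "F = (fact k :: complex)"
  define Q where "Q = (4^k :: complex)"
  have x0: "x \<noteq> 0" unfolding x_def by (simp del: of_nat_Suc)
  have F0: "F \<noteq> 0" unfolding F_def by simp
  have Q0: "Q \<noteq> 0" unfolding Q_def by simp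
  have q4: "(2::complex)^k * 2^k = 4^k" by (simp flip: power_mult_distrib)
  have p1: "(z/2)^(2*k+1) = z * (z^2)^k / (2 * Q)"
    unfolding Q_def by (simp add: power_add power_mult power_divide power2_eq_square field_simps q4)
  have p2: "(z^2)^(Suc k) = z * z * (z^2)^k" by (simp add: power2_eq_square)
  have f1: "(fact (1+k) :: complex) = x * F" unfolding x_def F_def by (simp add: fact_Suc algebra_simps)
  have n: "fps_nth (th fa) (Suc k) = x * (- (s / (4 * Q * (x * F)^2)))"
    unfolding th_nth fa_def fps_nth_Abs_fps aa_Suc' x_def s_def F_def Q_def ..
  show ?thesis unfolding p1 p2 of_nat_fact f1 n F_def[symmetric] s_def[symmetric]
    using x0 F0 Q0 by (simp add: field_simps power2_eq_square)
qed


lemma BJ1: "z \<noteq> 0 \<Longrightarrow> z * BesselJ 1 z = - FF1 (Ln z)"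
proof -
  assume z: "z \<noteq> 0"
  have Z: "exp (2 * Ln z) = z^2" using z by (simp add: exp_double)
  have "(\<lambda>n. fps_nth (th fa) n * (z^2) ^ n) sums EE (th fa) (Ln z)"
    using sums_EE[OF ent_th[OF ent_fa], of "Ln z"] unfolding Z .
  hence "(\<lambda>k. fps_nth (th fa) (Suc k) * (z^2) ^ (Suc k)) sums EE (th fa) (Ln z)"
    by (subst sums_Suc_iff) simp
  hence "(\<lambda>k. -2 * (fps_nth (th fa) (Suc k) * (z^2) ^ (Suc k))) sums (-2 * EE (th fa) (Ln z))"
    by (rule sums_mult)
  hence s: "(\<lambda>k. z * ((-1)^k * (z/2)^(2*k+1) / (of_nat (fact k) * of_nat (fact (1+k))))) sums (- FF1 (Ln z))"
    unfolding Jterm1 FF1_def by simp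
  hence "(\<lambda>k. (1/z) * (z * ((-1)^k * (z/2)^(2*k+1) / (of_nat (fact k) * of_nat (fact (1+k)))))) sums ((1/z) * (- FF1 (Ln z)))"
    by (rule sums_mult)
  hence "(\<lambda>k. (-1)^k * (z/2)^(2*k+1) / (of_nat (fact k) * of_nat (fact (1+k)))) sums ((1/z) * (- FF1 (Ln z)))"
    using z by simp
  hence "BesselJ 1 z = (1/z) * (- FF1 (Ln z))" unfolding BesselJ_def by (rule sums_unique[symmetric])
  thus ?thesis using z by simp
qed

definition hY :: "complex fps" where "hY = fa - fps_const 2 * th fp"

lemma ent_hY: "ent hY" unfolding hY_def by (intro ent_diff ent_mult ent_const ent_th ent_fa ent_fp)

lemma hY_0: "fps_nth hY 0 = 1" by (simp add: hY_def fa_def aa_def)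

lemma EE_hY: "EE hY w = FF w - 2 * EE (th fp) w"
  unfolding hY_def FF_def by (simp add: EE_diff EE_const ent_fa ent_mult ent_const ent_th ent_fp)

lemma Yterm1: "z \<noteq> 0 \<Longrightarrow> (Digamma (of_nat (k+1)) + Digamma (of_nat (1+k+1))) * (-(z^2)/4)^k
                / (of_nat (fact k) * of_nat (fact (1+k))) = (4 / z^2) * (fps_nth hY (Suc k) * (z^2)^(Suc k))" for z :: complex
proof -
  assume z: "z \<noteq> 0"
  define x where "x = (of_nat (Suc k) :: complex)"
  define s where "s = ((-1)^k :: complex)"
  define F where "F = (fact k :: complex)"
  define Q where "Q = (4^k :: complex)"
  define Z where "Z = z^2"
  define p where "p = psi k"
  have x0: "x \<noteq> 0" unfolding x_def by (simp del: of_nat_Suc)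
  have F0: "F \<noteq> 0" unfolding F_def by simp
  have Q0: "Q \<noteq> 0" unfolding Q_def by simp
  have Z0: "Z \<noteq> 0" unfolding Z_def using z by simp
  have a0: "-(z^2)/4 = (-1) * (z^2/4)" by simp
  have a: "(-(z^2)/4)^k = s * (z^2)^k / Q" unfolding a0 power_mult_distrib power_divide s_def Q_def by simp
  have b: "Digamma (of_nat (k+1)) = p" "Digamma (of_nat (1+k+1)) = p + 1/x"
    using psi_Suc[of k] by (simp_all add: psi_def p_def x_def add_ac)
  have f1: "(fact (1+k) :: complex) = x * F" unfolding x_def F_def by (simp add: fact_Suc algebra_simps)
  have n: "fps_nth hY (Suc k) = (- (s / (4 * Q * (x * F)^2))) - 2 * (x * ((- (s / (4 * Q * (x * F)^2))) * (p + 1/x)))"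
    unfolding hY_def fps_sub_nth fps_mult_left_const_nth th_nth fa_def fp_def fps_nth_Abs_fps aa_Suc'
    using psi_Suc[of k] by (simp add: x_def s_def F_def Q_def p_def)
  show ?thesis unfolding a b of_nat_fact f1 n F_def[symmetric] unfolding Z_def[symmetric]
    using x0 F0 Q0 Z0 by (simp add: field_simps power2_eq_square)
qed

lemma BY1: "z \<noteq> 0 \<Longrightarrow> z * BesselY 1 z = - (2 / of_real pi) * LL1 (Ln z)"
proof -
  assume z: "z \<noteq> 0"
  have Z: "exp (2 * Ln z) = z^2" using z by (simp add: exp_double)
  have "(\<lambda>n. fps_nth hY n * (z^2) ^ n) sums EE hY (Ln z)"
    using sums_EE[OF ent_hY, of "Ln z"] unfolding Z .
  hence "(\<lambda>k. fps_nth hY (Suc k) * (z^2) ^ (Suc k)) sums (EE hY (Ln z) - 1)"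
    by (subst sums_Suc_iff) (simp add: hY_0)
  hence "(\<lambda>k. (4 / z^2) * (fps_nth hY (Suc k) * (z^2) ^ (Suc k))) sums ((4 / z^2) * (EE hY (Ln z) - 1))"
    by (rule sums_mult)
  hence s: "(\<lambda>k. (Digamma (of_nat (k+1)) + Digamma (of_nat (1+k+1))) * (-(z^2)/4)^k
                / (of_nat (fact k) * of_nat (fact (1+k)))) sums ((4 / z^2) * (EE hY (Ln z) - 1))"
    unfolding Yterm1[OF z] .
  have pw: "(z/2) powi (- int 1) = 2 / z" by (simp add: power_int_minus)
  have "z * BesselY 1 z = - (z * (2 / z) / of_real pi) * 1
     + (2 / of_real pi) * uu (Ln z) * (z * BesselJ 1 z)
     - (z * (z / 2) / of_real pi) * ((4 / z^2) * (EE hY (Ln z) - 1))"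
    unfolding BesselY_def pw Ln_half[OF z] sums_unique[OF s, symmetric]
    by (simp add: algebra_simps)
  also have "\<dots> = - (2 / of_real pi) * LL1 (Ln z)"
    unfolding BJ1[OF z] EE_hY using z by (simp add: LL1_def FF1_def field_simps power2_eq_square)
  finally show ?thesis .
qed




definition Gm :: "complex \<Rightarrow> complex \<Rightarrow> complex" where
  "Gm c w = (c^2/2) * FF w + (-c) * LL w"
definition G1m :: "complex \<Rightarrow> complex \<Rightarrow> complex" where
  "G1m c w = (c^2/2) * FF1 w + (-c) * LL1 w"

lemma Gm_deriv: "(Gm c has_field_derivative G1m c w) (at w)"
  unfolding Gm_def[abs_def] G1m_def
  by (intro DERIV_add DERIV_cmult FF_deriv LL_deriv)

lemma G1m_deriv: "(G1m c has_field_derivative (- exp (2*w) * Gm c w)) (at w)"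
  apply (rule DERIV_cong)
   apply (unfold G1m_def[abs_def])
   apply (rule DERIV_add DERIV_cmult FF1_deriv LL1_deriv)+
  by (simp add: Gm_def algebra_simps)

lemma Gm_hol: "Gm c holomorphic_on UNIV"
  using Gm_deriv by (auto simp: holomorphic_on_open)

lemma EE_shift: "exp (2*c) = 1 \<Longrightarrow> EE f (w - c) = EE f w"
  unfolding EE_def by (simp add: right_diff_distrib exp_diff)

lemma Scov_shift: "exp (2*c) = 1 \<Longrightarrow> Scov (w - c) = Scov w + Gm c w"
  unfolding Scov_repr Gm_def LL_def FF_def EE_shift
  by (simp add: uu_def algebra_simps power2_eq_square)

lemma exp_int_pi: "exp (of_int j * (of_real pi * \<i>)) = (-1::complex) powi j"
proof (cases "j \<ge> 0")
  case True
  then obtain t where j: "j = int t" using nonneg_eq_int by blast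
  have "exp (of_nat t * (of_real pi * \<i>)) = exp (of_real pi * \<i>) ^ t" by (rule exp_of_nat_mult)
  thus ?thesis using j by (simp add: power_int_of_nat)
next
  case False
  then obtain t where j: "j = - int t" by (intro that[of "nat (-j)"]) auto
  have "exp (of_nat t * (of_real pi * \<i>)) = exp (of_real pi * \<i>) ^ t" by (rule exp_of_nat_mult)
  hence "exp (- (of_nat t * (of_real pi * \<i>))) = inverse ((-1) ^ t)" by (simp add: exp_minus)
  thus ?thesis using j by (simp add: power_int_minus power_int_of_nat)
qed

lemma neg1_powi_uminus: "(-1::complex) powi (- j) = (-1) powi j"
  by (simp add: power_int_minus power_int_inverse[symmetric])


lemma Kcombo:
  fixes J Y :: complex
  shows "(- of_int m * of_real (pi^2) * (of_int m + 1) / 4) * (J + \<i> * Y)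
       + (- of_int m * of_real (pi^2) * (of_int m - 1) / 4) * (J - \<i> * Y)
       = - ((of_int m)^2) * of_real (pi^2) / 2 * J - \<i> * of_int m * of_real (pi^2) / 2 * Y"
  by (simp add: field_simps power2_eq_square)

theorem lemma3p9:
  fixes n :: nat and m :: int and \<zeta> :: complex
  assumes "n \<ge> 1" and "\<zeta> \<noteq> 0" and "- pi < Arg \<zeta>" and "Arg \<zeta> < pi"
  shows "Scov_n n (Ln \<zeta> - of_int m * of_real pi * \<i>) =
      (-1) powi (m * int n) * Sn n \<zeta>
    + (-1) powi ((m + 1) * int n) / (2^n * of_nat (fact n)) * \<zeta> powi (- int n) *
      ( - delta m * (poly (odd_part (polyA n)) \<zeta> + poly (odd_part (polyB n)) \<zeta> * S10 \<zeta>
                     + \<zeta> * poly (odd_part (polyC n)) \<zeta> * deriv S10 \<zeta>)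
        + poly (bar_part m (polyB n)) \<zeta> *
            ((- of_int m * of_real (pi^2) * (of_int m + 1) / 4) * Hankel1 0 \<zeta>
             + (- of_int m * of_real (pi^2) * (of_int m - 1) / 4) * Hankel2 0 \<zeta>)
        - \<zeta> * poly (bar_part m (polyC n)) \<zeta> *
            ((- of_int m * of_real (pi^2) * (of_int m + 1) / 4) * Hankel1 1 \<zeta>
             + (- of_int m * of_real (pi^2) * (of_int m - 1) / 4) * Hankel2 1 \<zeta>))"
proof -
  note z = assms(2)
  obtain k where n: "n = Suc k" using assms(1) by (cases n) auto
  define w0 where "w0 = Ln \<zeta>"
  define c where "c = of_int m * of_real pi * \<i>"
  have ew: "exp w0 = \<zeta>" using z by (simp add: w0_def)
  have c1: "exp (2*c) = 1"
  proof -
    have "2 * c = of_int (2*m) * (of_real pi * \<i>)" by (simp add: c_def)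
    thus ?thesis by (simp only: exp_int_pi) (simp add: power_int_mult)
  qed
  have ev: "evp (polyA n)" "evp (polyB n)" "evp (polyC n)" using evp_ABC[of k] n by auto
  define B where "B = poly (polyB n) \<zeta>"
  define C where "C = poly (polyC n) \<zeta>"
  define D where "D = (Dsq ^^ n) Scov w0"
  define X where "X = B * Gm c w0 + C * G1m c w0"
  have DS: "(Dsq ^^ n) Scov (w0 - c) = D + (Dsq ^^ n) (Gm c) w0"
  proof -
    have "(Dsq ^^ n) Scov (w0 - c) = (Dsq ^^ n) (\<lambda>w. Scov (w - c)) w0"
      by (simp add: Dsqn_shift[OF Scov_hol c1])
    also have "(\<lambda>w. Scov (w - c)) = (\<lambda>w. Scov w + Gm c w)" using Scov_shift[OF c1] by auto
    also have "(Dsq ^^ n) (\<lambda>w. Scov w + Gm c w) w0 = D + (Dsq ^^ n) (Gm c) w0"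
      by (simp add: Dsqn_add[OF Scov_hol Gm_hol] D_def)
    finally show ?thesis .
  qed
  have DG: "(Dsq ^^ n) (Gm c) w0 = exp (- (2 * of_nat n * w0)) / 2^n * X"
    unfolding n Dsq_ode[OF Gm_deriv[of c] G1m_deriv[of c], of k] X_def B_def C_def n ew by simp
  have H0: "(- of_int m * of_real (pi^2) * (of_int m + 1) / 4) * Hankel1 0 \<zeta>
             + (- of_int m * of_real (pi^2) * (of_int m - 1) / 4) * Hankel2 0 \<zeta> = Gm c w0"
    unfolding Hankel1_def Hankel2_def Kcombo BJ0[OF z] BY0[OF z] Gm_def c_def w0_def
    by (simp add: algebra_simps power2_eq_square power_mult_distrib)
  have H1: "\<zeta> * ((- of_int m * of_real (pi^2) * (of_int m + 1) / 4) * Hankel1 1 \<zeta>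
             + (- of_int m * of_real (pi^2) * (of_int m - 1) / 4) * Hankel2 1 \<zeta>) = - G1m c w0"
  proof -
    have "\<zeta> * ((- of_int m * of_real (pi^2) * (of_int m + 1) / 4) * Hankel1 1 \<zeta>
             + (- of_int m * of_real (pi^2) * (of_int m - 1) / 4) * Hankel2 1 \<zeta>)
       = - ((of_int m)^2) * of_real (pi^2) / 2 * (\<zeta> * BesselJ 1 \<zeta>) - \<i> * of_int m * of_real (pi^2) / 2 * (\<zeta> * BesselY 1 \<zeta>)"
      unfolding Hankel1_def Hankel2_def Kcombo by (simp add: algebra_simps)
    also have "\<dots> = - G1m c w0"
      unfolding BJ1[OF z] BY1[OF z] G1m_def c_def w0_def
      by (simp add: algebra_simps power2_eq_square power_mult_distrib)
    finally show ?thesis .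
  qed
  have sg: "exp (of_nat n * (w0 - c)) = \<zeta>^n * (-1) powi (m * int n)"
  proof -
    have "of_nat n * (w0 - c) = of_nat n * w0 + of_int (- (m * int n)) * (of_real pi * \<i>)"
      by (simp add: c_def algebra_simps)
    hence "exp (of_nat n * (w0 - c)) = exp w0 ^ n * (-1) powi (- (m * int n))"
      by (simp only: exp_add exp_of_nat_mult exp_int_pi)
    thus ?thesis by (simp add: ew neg1_powi_uminus)
  qed
  have sg2: "(-1::complex) powi ((m + 1) * int n) = (-1) powi (m * int n) * (-1)^n"
    by (simp add: distrib_right power_int_add power_int_of_nat)
  have en: "exp (- (2 * of_nat n * w0)) = inverse (\<zeta>^n) ^ 2"
  proof -
    have "exp (- (2 * of_nat n * w0)) = inverse (exp (of_nat n * w0) ^ 2)"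
      by (simp add: exp_minus exp_of_nat_mult[symmetric] mult_ac power2_eq_square exp_add[symmetric])
    thus ?thesis by (simp add: exp_of_nat_mult ew power_inverse)
  qed
  have Sn: "Sn n \<zeta> = (-1)^n * \<zeta>^n / of_nat (fact n) * D"
    unfolding Sn_def Scov_n_def D_def w0_def[symmetric] by (simp add: exp_of_nat_mult ew)
  have zn: "\<zeta>^n \<noteq> 0" using z by simp
  have "Scov_n n (Ln \<zeta> - of_int m * of_real pi * \<i>) = (-1)^n * (\<zeta>^n * (-1) powi (m * int n)) / of_nat (fact n) * (D + exp (- (2 * of_nat n * w0)) / 2^n * X)"
    unfolding Scov_n_def w0_def[symmetric] c_def[symmetric] sg DS DG ..
  also have "\<dots> = (-1) powi (m * int n) * Sn n \<zeta>
    + (-1) powi ((m + 1) * int n) / (2^n * of_nat (fact n)) * \<zeta> powi (- int n) * (B * Gm c w0 - C * (- G1m c w0))"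
    unfolding Sn sg2 en X_def using zn
    by (simp add: power_int_minus power_int_of_nat field_simps power2_eq_square)
  moreover have H1': "\<zeta> * C * ((- of_int m * of_real (pi^2) * (of_int m + 1) / 4) * Hankel1 1 \<zeta>
             + (- of_int m * of_real (pi^2) * (of_int m - 1) / 4) * Hankel2 1 \<zeta>) = C * (- G1m c w0)"
    using H1 by (metis mult.commute mult.left_commute)
  ultimately show ?thesis
    unfolding odd_part_evp[OF ev(1)] odd_part_evp[OF ev(2)] odd_part_evp[OF ev(3)]
      bar_part_evp[OF ev(2)] bar_part_evp[OF ev(3)]
    unfolding B_def[symmetric] C_def[symmetric]
    unfolding H0 H1' by simp
qed


end
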